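(* Let $Q=\{\rho=0\}$ with $\rho(x_1,x_2,x_3)=x_1^2+x_2^2+x_3^2-2(x_1x_2+x_2x_3+x_3x_1)$, and $\mathcal U=\{[x]\in\mathbb{RP}^2:\rho(x)<0\}$. Then: (1) $f(a_j)=Q$ for each $a_j\in\mathcal I(f)$; (2) $f(p)=p$ for every $p\in Q\setminus\mathcal I(f)$; (3) for every $p\in\mathbb{P}^2\setminus(A_1\cup A_2\cup A_3)$, $p\in\mathcal U$ if and only if $f(p)\in\mathcal U$.
   Context: $g[x_1:x_2:x_3]=[x_1^2:x_2^2:x_3^2]$, $h[x_1:x_2:x_3]=[x_1(-x_1+x_2+x_3):x_2(x_1-x_2+x_3):x_3(x_1+x_2-x_3)]$, $f=g\circ h$. $\mathcal I(f)=\{a_1,a_2,a_3\}$ with $a_1=[0:1:1]$, $a_2=[1:0:1]$, $a_3=[1:1:0]$, and $A_i$ is the line through $\{a_1,a_2,a_3\}\setminus\{a_i\}$. For $p\in\mathcal I(f)$, $f(p)$ denotes the set of all limits $\lim f(p_j)$ with $p_j\to p$, $p_j\notin\mathcal I(f)$. ($\rho(x)<0$ is well defined on $\mathbb{RP}^2$ since $\rho$ is homogeneous of even degree; $\mathcal U$ is the open disk in $\mathbb{RP}^2$ bounded by $Q\cap\mathbb{RP}^2$, which is tangent to the lines $x_j=0$ at the points of $\mathcal I(f)$.) *)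

theory Defs
  imports "HOL-Analysis.Analysis"
begin

type_synonym cvec = "complex \<times> complex \<times> complex"

definition sc :: "complex \<Rightarrow> cvec \<Rightarrow> cvec" where
  "sc c v = (case v of (x1, x2, x3) \<Rightarrow> (c * x1, c * x2, c * x3))"

definition pt :: "cvec \<Rightarrow> cvec set" where
  "pt x = {y. y \<noteq> 0 \<and> (\<exists>c. c \<noteq> 0 \<and> y = sc c x)}"

definition P2 :: "cvec set set" where
  "P2 = pt ` (UNIV - {0})"

definition gmap :: "cvec \<Rightarrow> cvec" where
  "gmap v = (case v of (x1, x2, x3) \<Rightarrow> (x1^2, x2^2, x3^2))"

definition hmap :: "cvec \<Rightarrow> cvec" where
  "hmap v = (case v of (x1, x2, x3) \<Rightarrow>
     (x1 * (- x1 + x2 + x3), x2 * (x1 - x2 + x3), x3 * (x1 + x2 - x3)))"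

definition Fmap :: "cvec \<Rightarrow> cvec" where
  "Fmap v = gmap (hmap v)"

definition Ind :: "cvec set set" where
  "Ind = {p \<in> P2. \<forall>x\<in>p. Fmap x = 0}"

text \<open>Action of f on a projective point (meaningful off Ind).\<close>
definition fpt :: "cvec set \<Rightarrow> cvec set" where
  "fpt p = pt (Fmap (SOME x. x \<in> p))"

text \<open>Convergence in the (quotient topology of the) projective plane:
  there are representatives converging in C^3 to a representative of the limit.\<close>
definition convP :: "(nat \<Rightarrow> cvec set) \<Rightarrow> cvec set \<Rightarrow> bool" where
  "convP P q \<longleftrightarrow> (\<exists>X x. (\<forall>j. X j \<in> P j) \<and> x \<in> q \<and> X \<longlonglongrightarrow> x)"

definition flim :: "cvec set \<Rightarrow> cvec set set" where
  "flim p = {q \<in> P2. \<exists>P. (\<forall>j. P j \<in> P2 - Ind) \<and> convP P p \<and> convP (\<lambda>j. fpt (P j)) q}"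

definition rho :: "cvec \<Rightarrow> complex" where
  "rho v = (case v of (x1, x2, x3) \<Rightarrow>
     x1^2 + x2^2 + x3^2 - 2 * (x1 * x2 + x2 * x3 + x3 * x1))"

definition Qc :: "cvec set set" where
  "Qc = {p \<in> P2. \<forall>x\<in>p. rho x = 0}"

definition is_real :: "cvec \<Rightarrow> bool" where
  "is_real v = (case v of (x1, x2, x3) \<Rightarrow> Im x1 = 0 \<and> Im x2 = 0 \<and> Im x3 = 0)"

text \<open>U: real points with rho < 0 (well defined since rho is even-degree homogeneous).\<close>
definition U :: "cvec set set" where
  "U = {p \<in> P2. \<exists>x\<in>p. is_real x \<and> Re (rho x) < 0}"

definition a1 :: cvec where "a1 = (0, 1, 1)"
definition a2 :: cvec where "a2 = (1, 0, 1)"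
definition a3 :: cvec where "a3 = (1, 1, 0)"

definition pline :: "cvec \<Rightarrow> cvec \<Rightarrow> cvec set set" where
  "pline a b = {p \<in> P2. \<exists>x\<in>p. \<exists>s t. x = sc s a + sc t b}"

definition A1 :: "cvec set set" where "A1 = pline a2 a3"
definition A2 :: "cvec set set" where "A2 = pline a1 a3"
definition A3 :: "cvec set set" where "A3 = pline a1 a2"

end

theory Submission
  imports Defs
begin


lemma sc_simp[simp]: "sc c (x1,x2,x3) = (c*x1,c*x2,c*x3)" by (simp add: sc_def)
lemma zero_cvec: "(0::cvec) = (0,0,0)" by (simp add: zero_prod_def)
lemma cvec_eq0[simp]: "((x1,x2,x3) = (0::cvec)) \<longleftrightarrow> x1 = 0 \<and> x2 = 0 \<and> x3 = 0"
  by (simp add: zero_prod_def)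
lemma F_simp[simp]: "Fmap (x1,x2,x3) = ((x1*(-x1+x2+x3))^2, (x2*(x1-x2+x3))^2, (x3*(x1+x2-x3))^2)"
  by (simp add: Fmap_def gmap_def hmap_def)
lemma rho_simp[simp]: "rho (x1,x2,x3) = x1^2 + x2^2 + x3^2 - 2 * (x1 * x2 + x2 * x3 + x3 * x1)"
  by (simp add: rho_def)

lemma sc_sc: "sc a (sc b x) = sc (a*b) x" by (cases x) (simp add: mult.assoc)
lemma sc_1[simp]: "sc 1 x = x" by (cases x) simp
lemma sc_eq0: "sc c x = 0 \<longleftrightarrow> c = 0 \<or> x = 0" by (cases x) auto

lemma F_sc: "Fmap (sc c x) = sc (c^4) (Fmap x)"
  by (cases x) (simp add: algebra_simps power2_eq_square power4_eq_xxxx)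
lemma rho_sc: "rho (sc c x) = c^2 * rho x"
  by (cases x) (simp add: algebra_simps power2_eq_square)

lemma in_pt: "y \<in> pt x \<longleftrightarrow> y \<noteq> 0 \<and> (\<exists>c. c\<noteq>0 \<and> y = sc c x)" by (simp add: pt_def)
lemma self_pt: "x \<noteq> 0 \<Longrightarrow> x \<in> pt x" unfolding in_pt by (rule conjI, simp, rule exI[of _ 1], simp)
lemma pt_eq: assumes "y \<in> pt x" shows "pt y = pt x"
proof -
  obtain c where c: "c \<noteq> 0" "y = sc c x" using assms by (auto simp: in_pt)
  show ?thesis
  proof (rule set_eqI)
    fix z show "z \<in> pt y \<longleftrightarrow> z \<in> pt x"
    proof
      assume "z \<in> pt y" then obtain d where "z \<noteq> 0" "d \<noteq> 0" "z = sc d y" by (auto simp: in_pt)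
      then have "z = sc (d*c) x" "d*c \<noteq> 0" using c by (auto simp: sc_sc)
      then show "z \<in> pt x" using \<open>z \<noteq> 0\<close> unfolding in_pt by blast
    next
      assume "z \<in> pt x" then obtain d where d: "z \<noteq> 0" "d \<noteq> 0" "z = sc d x" by (auto simp: in_pt)
      have "z = sc (d/c) y" using c d by (simp add: sc_sc)
      moreover have "d/c \<noteq> 0" using c d by simp
      ultimately show "z \<in> pt y" using d(1) unfolding in_pt by blast
    qed
  qed
qed
lemma pt_two: assumes "u \<in> pt w" "v \<in> pt w" shows "\<exists>k. k \<noteq> 0 \<and> u = sc k v"
proof -
  obtain a where a: "a \<noteq> 0" "u = sc a w" using assms by (auto simp: in_pt)
  obtain b where b: "b \<noteq> 0" "v = sc b w" using assms by (auto simp: in_pt)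
  have "u = sc (a/b) v" using a b by (simp add: sc_sc)
  moreover have "a/b \<noteq> 0" using a b by simp
  ultimately show ?thesis by blast
qed
lemma P2_rep: assumes "p \<in> P2" shows "\<exists>x. x \<noteq> 0 \<and> p = pt x \<and> x \<in> p"
proof -
  obtain x where "x \<in> UNIV - {0}" "p = pt x" using assms unfolding P2_def by blast
  then show ?thesis using self_pt by blast
qed
lemma P2_some: "p \<in> P2 \<Longrightarrow> (SOME z. z \<in> p) \<in> p"
  using P2_rep by (meson someI)
lemma P2_pt: "p \<in> P2 \<Longrightarrow> x \<in> p \<Longrightarrow> p = pt x"
  using P2_rep pt_eq by metis
lemma pt_P2: "x \<noteq> 0 \<Longrightarrow> pt x \<in> P2" unfolding P2_def by blast

lemma fpt_rep: assumes "p \<in> P2" "x \<in> p" "c \<noteq> 0" "sc c (Fmap x) \<noteq> 0"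
  shows "sc c (Fmap x) \<in> fpt p"
proof -
  let ?z = "SOME z. z \<in> p"
  have "?z \<in> p" using P2_some assms by auto
  then obtain k where k: "k \<noteq> 0" "?z = sc k x" using pt_two assms P2_pt by metis
  have "sc c (Fmap x) = sc (c / k^4) (Fmap ?z)" using k by (simp add: F_sc sc_sc)
  moreover have "c / k^4 \<noteq> 0" using assms k by simp
  ultimately show ?thesis unfolding fpt_def in_pt using assms(4) by blast
qed

lemma F_on_Q: assumes "rho x = 0" shows "Fmap x = sc (4* fst x* fst (snd x)* snd (snd x)) x"
proof -
  obtain x1 x2 x3 where x: "x = (x1,x2,x3)" by (cases x)
  have r: "x1^2 + x2^2 + x3^2 - 2 * (x1 * x2 + x2 * x3 + x3 * x1) = 0" using assms x by simp
  have "(x1*(-x1+x2+x3))^2 = x1^2*(x1^2 + x2^2 + x3^2 - 2 * (x1 * x2 + x2 * x3 + x3 * x1)) + 4*x1*x2*x3*x1"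
       "(x2*(x1-x2+x3))^2 = x2^2*(x1^2 + x2^2 + x3^2 - 2 * (x1 * x2 + x2 * x3 + x3 * x1)) + 4*x1*x2*x3*x2"
       "(x3*(x1+x2-x3))^2 = x3^2*(x1^2 + x2^2 + x3^2 - 2 * (x1 * x2 + x2 * x3 + x3 * x1)) + 4*x1*x2*x3*x3"
    by (simp_all add: algebra_simps power2_eq_square)
  then show ?thesis using r x by simp
qed

lemma rhoF: "rho (Fmap x) = rho x * ((-fst x + fst (snd x) + snd (snd x)) * (fst x - fst (snd x) + snd (snd x)) * (fst x + fst (snd x) - snd (snd x)))^2"
  by (cases x) (simp add: algebra_simps power2_eq_square power4_eq_xxxx)



lemma h_zero:
  fixes x1 x2 x3 :: complex
  assumes "x1*(-x1+x2+x3)=0" "x2*(x1-x2+x3)=0" "x3*(x1+x2-x3)=0" "\<not>(x1=0\<and>x2=0\<and>x3=0)"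
  shows "(x1=0 \<and> x3=x2) \<or> (x2=0 \<and> x3=x1) \<or> (x3=0 \<and> x2=x1)"
proof -
  have "x1 = 0 \<or> (-x1+x2+x3) = 0" using assms(1) by simp
  then have e1: "x1 = 0 \<or> x1 = x2+x3" by (metis add_diff_cancel_left add_diff_cancel_right diff_add_eq diff_0 eq_iff_diff_eq_0 minus_diff_eq uminus_add_conv_diff add.commute add.left_commute)
  have "x2 = 0 \<or> (x1-x2+x3) = 0" using assms(2) by simp
  then have e2: "x2 = 0 \<or> x2 = x1+x3" by (metis add_diff_cancel_left add_diff_cancel_right diff_add_eq diff_0 eq_iff_diff_eq_0 minus_diff_eq uminus_add_conv_diff add.commute add.left_commute)
  have "x3 = 0 \<or> (x1+x2-x3) = 0" using assms(3) by simp
  then have e3: "x3 = 0 \<or> x3 = x1+x2" by (metis add_diff_cancel_left add_diff_cancel_right diff_add_eq diff_0 eq_iff_diff_eq_0 minus_diff_eq uminus_add_conv_diff add.commute add.left_commute)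
  show ?thesis using e1 e2 e3 assms(4) by (auto simp: algebra_simps)
qed

lemma Ind_cases: assumes "p \<in> Ind" shows "p = pt a1 \<or> p = pt a2 \<or> p = pt a3"
proof -
  have pP: "p \<in> P2" using assms by (simp add: Ind_def)
  obtain x where x: "x \<noteq> 0" "p = pt x" "x \<in> p" using P2_rep[OF pP] by blast
  have F0: "Fmap x = 0" using assms x by (simp add: Ind_def)
  obtain x1 x2 x3 where xx: "x = (x1,x2,x3)" by (cases x)
  have "x1*(-x1+x2+x3)=0" "x2*(x1-x2+x3)=0" "x3*(x1+x2-x3)=0" "\<not>(x1=0\<and>x2=0\<and>x3=0)"
    using F0 x(1) xx by auto
  then have c: "(x1=0 \<and> x3=x2) \<or> (x2=0 \<and> x3=x1) \<or> (x3=0 \<and> x2=x1)" by (rule h_zero)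
  have "x \<in> pt a1 \<or> x \<in> pt a2 \<or> x \<in> pt a3"
  proof -
    { assume "x1=0 \<and> x3=x2" then have "x = sc x2 a1" "x2 \<noteq> 0" using xx x(1) by (auto simp: a1_def)
      then have "x \<in> pt a1" using x(1) unfolding in_pt by blast }
    moreover
    { assume "x2=0 \<and> x3=x1" then have "x = sc x1 a2" "x1 \<noteq> 0" using xx x(1) by (auto simp: a2_def)
      then have "x \<in> pt a2" using x(1) unfolding in_pt by blast }
    moreover
    { assume "x3=0 \<and> x2=x1" then have "x = sc x1 a3" "x1 \<noteq> 0" using xx x(1) by (auto simp: a3_def)
      then have "x \<in> pt a3" using x(1) unfolding in_pt by blast }
    ultimately show ?thesis using c by blast
  qed
  then show ?thesis using pt_eq x(2) by metis
qed

lemma part2: assumes "p \<in> Qc" "p \<notin> Ind" shows "fpt p = p"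
proof -
  have pP: "p \<in> P2" using assms by (simp add: Qc_def)
  obtain x where x: "x \<in> p" "Fmap x \<noteq> 0" using assms pP by (auto simp: Ind_def)
  let ?z = "SOME z. z \<in> p"
  have z: "?z \<in> p" using P2_some pP by auto
  then obtain k where k: "k \<noteq> 0" "?z = sc k x" using pt_two x P2_pt pP by metis
  have Fz: "Fmap ?z \<noteq> 0" using k x by (simp add: F_sc sc_eq0)
  have rz: "rho ?z = 0" using z assms by (simp add: Qc_def)
  define c where "c = 4*fst ?z*fst (snd ?z)* snd (snd ?z)"
  have e: "Fmap ?z = sc c ?z" using F_on_Q[OF rz] c_def by simp
  then have "c \<noteq> 0" using Fz by (auto simp: sc_eq0)
  then have "Fmap ?z \<in> pt ?z" using e Fz unfolding in_pt by blast
  then have "pt (Fmap ?z) = pt ?z" by (rule pt_eq)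
  also have "\<dots> = p" using P2_pt[OF pP z] by simp
  finally show ?thesis unfolding fpt_def .
qed



lemma rho_fs: "rho v = fst v^2 + fst (snd v)^2 + snd (snd v)^2 - 2 * (fst v * fst (snd v) + fst (snd v) * snd (snd v) + snd (snd v) * fst v)"
  by (cases v) simp

lemma key_idents:
  fixes x1 x2 x3 lam :: complex
  defines "Y \<equiv> sc lam (Fmap (x1,x2,x3))"
  shows "rho Y * x2^2 * x3^2 = rho (x1,x2,x3) * (-x1+x2+x3)^2 * fst (snd Y) * snd (snd Y)"
    "rho Y * x1^2 * x3^2 = rho (x1,x2,x3) * (x1-x2+x3)^2 * fst Y * snd (snd Y)"
    "rho Y * x1^2 * x2^2 = rho (x1,x2,x3) * (x1+x2-x3)^2 * fst Y * fst (snd Y)"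
proof -
  have r: "rho Y = lam^2 * rho (x1,x2,x3) * ((-x1+x2+x3)*(x1-x2+x3)*(x1+x2-x3))^2"
    unfolding Y_def rho_sc rhoF by simp
  have Y: "Y = (lam*(x1*(-x1+x2+x3))^2, lam*(x2*(x1-x2+x3))^2, lam*(x3*(x1+x2-x3))^2)"
    unfolding Y_def by simp
  show "rho Y * x2^2 * x3^2 = rho (x1,x2,x3) * (-x1+x2+x3)^2 * fst (snd Y) * snd (snd Y)"
    "rho Y * x1^2 * x3^2 = rho (x1,x2,x3) * (x1-x2+x3)^2 * fst Y * snd (snd Y)"
    "rho Y * x1^2 * x2^2 = rho (x1,x2,x3) * (x1+x2-x3)^2 * fst Y * fst (snd Y)"
    unfolding r by (simp_all only: Y fst_conv snd_conv) (simp_all add: power_mult_distrib power2_eq_square)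
qed

lemma flim_sub: assumes "a \<in> Ind" "q \<in> flim a" shows "q \<in> Qc"
proof -
  obtain P where P: "\<forall>j. P j \<in> P2 - Ind" "convP P a" "convP (\<lambda>j. fpt (P j)) q" and qP: "q \<in> P2"
    using assms(2) unfolding flim_def by blast
  obtain X x where X: "\<forall>j. X j \<in> P j" "x \<in> a" "X \<longlonglongrightarrow> x" using P(2) unfolding convP_def by blast
  obtain Y y where Y: "\<forall>j. Y j \<in> fpt (P j)" "y \<in> q" "Y \<longlonglongrightarrow> y" using P(3) unfolding convP_def by blast
  have "\<forall>j. \<exists>l. Y j = sc l (Fmap (X j))"
  proof
    fix j
    have PP: "P j \<in> P2" using P(1) by blast
    let ?z = "SOME z. z \<in> P j"
    have "?z \<in> P j" using P2_some PP by auto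
    then obtain k where k: "?z = sc k (X j)" using pt_two X(1) P2_pt PP by metis
    have "Y j \<in> pt (Fmap ?z)" using Y(1) unfolding fpt_def by blast
    then obtain d where "Y j = sc d (Fmap ?z)" unfolding in_pt by blast
    then have "Y j = sc (d*k^4) (Fmap (X j))" using k by (simp add: F_sc sc_sc)
    then show "\<exists>l. Y j = sc l (Fmap (X j))" by blast
  qed
  then obtain lam where lam: "\<And>j. Y j = sc (lam j) (Fmap (X j))" by metis
  define E1 where "E1 = (\<lambda>(u::cvec) (v::cvec). rho v * fst (snd u)^2 * snd (snd u)^2 - rho u * (-fst u + fst (snd u) + snd (snd u))^2 * fst (snd v) * snd (snd v))"
  define E2 where "E2 = (\<lambda>(u::cvec) (v::cvec). rho v * fst u^2 * snd (snd u)^2 - rho u * (fst u - fst (snd u) + snd (snd u))^2 * fst v * snd (snd v))"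
  define E3 where "E3 = (\<lambda>(u::cvec) (v::cvec). rho v * fst u^2 * fst (snd u)^2 - rho u * (fst u + fst (snd u) - snd (snd u))^2 * fst v * fst (snd v))"
  have Z: "E1 (X j) (Y j) = 0 \<and> E2 (X j) (Y j) = 0 \<and> E3 (X j) (Y j) = 0" for j
  proof -
    obtain x1 x2 x3 where xx: "X j = (x1,x2,x3)" by (cases "X j")
    show ?thesis unfolding E1_def E2_def E3_def lam xx using key_idents[of "lam j" x1 x2 x3] by simp
  qed
  have L1: "(\<lambda>j. E1 (X j) (Y j)) \<longlonglongrightarrow> E1 x y" unfolding E1_def rho_fs
    by (intro tendsto_intros X(3) Y(3))
  have L2: "(\<lambda>j. E2 (X j) (Y j)) \<longlonglongrightarrow> E2 x y" unfolding E2_def rho_fs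
    by (intro tendsto_intros X(3) Y(3))
  have L3: "(\<lambda>j. E3 (X j) (Y j)) \<longlonglongrightarrow> E3 x y" unfolding E3_def rho_fs
    by (intro tendsto_intros X(3) Y(3))
  have "(\<lambda>j. E1 (X j) (Y j)) = (\<lambda>j. 0)" "(\<lambda>j. E2 (X j) (Y j)) = (\<lambda>j. 0)" "(\<lambda>j. E3 (X j) (Y j)) = (\<lambda>j. 0)"
    using Z by auto
  then have "E1 x y = 0" "E2 x y = 0" "E3 x y = 0"
    using L1 L2 L3 LIMSEQ_const_iff by metis+
  moreover have "a = pt a1 \<or> a = pt a2 \<or> a = pt a3" using Ind_cases assms(1) by blast
  ultimately have ry: "rho y = 0"
  proof (elim disjE)
    assume "E1 x y = 0" "a = pt a1"
    then have "x \<in> pt a1" using X(2) by simp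
    then obtain c where "c \<noteq> 0" "x = sc c a1" unfolding in_pt by blast
    then have "c \<noteq> 0" "x = (0, c, c)" by (simp_all add: a1_def)
    then show ?thesis using \<open>E1 x y = 0\<close> unfolding E1_def by (simp add: power2_eq_square)
  next
    assume "E2 x y = 0" "a = pt a2"
    then have "x \<in> pt a2" using X(2) by simp
    then obtain c where "c \<noteq> 0" "x = sc c a2" unfolding in_pt by blast
    then have "c \<noteq> 0" "x = (c, 0, c)" by (simp_all add: a2_def)
    then show ?thesis using \<open>E2 x y = 0\<close> unfolding E2_def by (simp add: power2_eq_square)
  next
    assume "E3 x y = 0" "a = pt a3"
    then have "x \<in> pt a3" using X(2) by simp
    then obtain c where "c \<noteq> 0" "x = sc c a3" unfolding in_pt by blast
    then have "c \<noteq> 0" "x = (c, c, 0)" by (simp_all add: a3_def)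
    then show ?thesis using \<open>E3 x y = 0\<close> unfolding E3_def by (simp add: power2_eq_square)
  qed
  have "q = pt y" using P2_pt qP Y(2) by blast
  have "\<forall>v\<in>q. rho v = 0"
  proof
    fix v assume "v \<in> q"
    then have "v \<in> pt y" using \<open>q = pt y\<close> by simp
    then obtain e where "v = sc e y" unfolding in_pt by blast
    then show "rho v = 0" using ry by (simp only: rho_sc) simp
  qed
  then show ?thesis using qP unfolding Qc_def by blast
qed



lemma sq_choice:
  fixes y1 y2 y3 :: complex
  assumes "rho (y1,y2,y3) = 0"
  shows "\<exists>al be ga. al^2 = y1 \<and> be^2 = y2 \<and> ga^2 = y3 \<and> al = be + ga"
proof -
  define a where "a = csqrt y1"
  define b where "b = csqrt y2"
  define c where "c = csqrt y3"
  have sq: "a^2 = y1" "b^2 = y2" "c^2 = y3" unfolding a_def b_def c_def by simp_all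
  have "(a+b+c)*(-a+b+c)*(a-b+c)*(a+b-c) = - rho (a^2,b^2,c^2)"
    by (simp add: algebra_simps power2_eq_square)
  then have "(a+b+c)*(-a+b+c)*(a-b+c)*(a+b-c) = 0" using assms sq by simp
  then have "a+b+c = 0 \<or> -a+b+c = 0 \<or> a-b+c = 0 \<or> a+b-c = 0" by simp
  then show ?thesis
  proof (elim disjE)
    assume "a+b+c = 0" then have "b + c + a = 0" by (simp add: algebra_simps)
    then have "b + c = -a" by (simp add: eq_neg_iff_add_eq_0)
    then have "-a = b + c" by simp
    moreover have "(-a)^2 = y1" using sq by (simp only: power2_minus)
    ultimately have "(-a)^2 = y1 \<and> (b)^2 = y2 \<and> (c)^2 = y3 \<and> -a = b + c" using sq by blast
    then show ?thesis by blast
  next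
    assume "-a+b+c = 0" then have "a = b + c" by (simp add: algebra_simps)
    then have "(a)^2 = y1 \<and> (b)^2 = y2 \<and> (c)^2 = y3 \<and> a = b + c" using sq by simp
    then show ?thesis by blast
  next
    assume "a-b+c = 0" then have "a = b + -c" by (simp add: algebra_simps)
    then have "(a)^2 = y1 \<and> (b)^2 = y2 \<and> (-c)^2 = y3 \<and> a = b + -c" using sq by simp
    then show ?thesis by blast
  next
    assume "a+b-c = 0" then have "a = -b + c" by (simp add: algebra_simps)
    then have "(a)^2 = y1 \<and> (-b)^2 = y2 \<and> (c)^2 = y3 \<and> a = -b + c" using sq by simp
    then show ?thesis by blast
  qed
qed

lemma small_ne: fixes w :: complex and s :: real assumes "0 \<le> s" "s * cmod w < 1"
  shows "1 - of_real s * w \<noteq> 0"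
proof
  assume "1 - of_real s * w = 0"
  then have "of_real s * w = 1" by simp
  then have "cmod (of_real s * w) = 1" by simp
  then have "s * cmod w = 1" using assms(1) by (simp add: norm_mult)
  then show False using assms(2) by simp
qed

lemma t_exists: fixes al be ga :: complex
  shows "\<exists>t. t \<longlonglongrightarrow> 0 \<and> (\<forall>j. t j \<noteq> 0 \<and> 1 - t j * al \<noteq> 0 \<and> 1 - t j * be \<noteq> 0 \<and> 1 - t j * ga \<noteq> 0)"
proof -
  define N where "N = 1 + cmod al + cmod be + cmod ga"
  have N: "N > 0" unfolding N_def by (simp add: add_pos_nonneg)
  define s where "s = (\<lambda>j. inverse (N * real (Suc j)))"
  have s0: "s j > 0" for j unfolding s_def using N by simp
  have sw: "s j * cmod w < 1" if "cmod w < N" for j w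
  proof -
    have "cmod w < N * real (Suc j)" using that N
      by (smt (verit) mult_le_cancel_left1 of_nat_0_le_iff of_nat_Suc)
    moreover have pos: "N * real (Suc j) > 0" using N by simp
    moreover have "s j * cmod w = cmod w / (N * real (Suc j))" by (simp add: s_def divide_inverse mult.commute)
    ultimately show ?thesis by (simp add: divide_less_eq_1_pos)
  qed
  have lt: "cmod al < N" "cmod be < N" "cmod ga < N"
    using norm_ge_zero[of al] norm_ge_zero[of be] norm_ge_zero[of ga] unfolding N_def by linarith+
  have "(\<lambda>j. inverse N * inverse (real (Suc j))) \<longlonglongrightarrow> inverse N * 0"
    by (intro tendsto_intros LIMSEQ_inverse_real_of_nat)
  then have "s \<longlonglongrightarrow> 0" unfolding s_def by (simp add: mult.commute)
  then have "(\<lambda>j. complex_of_real (s j)) \<longlonglongrightarrow> complex_of_real 0" by (intro tendsto_intros)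
  then have "(\<lambda>j. complex_of_real (s j)) \<longlonglongrightarrow> 0" by simp
  moreover have "\<forall>j. complex_of_real (s j) \<noteq> 0 \<and> 1 - complex_of_real (s j) * al \<noteq> 0
      \<and> 1 - complex_of_real (s j) * be \<noteq> 0 \<and> 1 - complex_of_real (s j) * ga \<noteq> 0"
    using s0 sw lt small_ne by (metis less_imp_le of_real_eq_0_iff order_less_irrefl)
  ultimately show ?thesis by blast
qed

lemma path_flim:
  assumes "\<forall>j. X j \<noteq> 0" "\<forall>j. c j \<noteq> 0" "\<forall>j. Y j \<noteq> 0" "\<forall>j. Fmap (X j) = sc (c j) (Y j)"
    "X \<longlonglongrightarrow> x0" "x0 \<noteq> 0" "Y \<longlonglongrightarrow> y" "y \<noteq> 0"
  shows "pt y \<in> flim (pt x0)"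
proof -
  define P where "P = (\<lambda>j. pt (X j))"
  have PP: "P j \<in> P2" for j unfolding P_def using assms(1) pt_P2 by blast
  have XP: "X j \<in> P j" for j unfolding P_def using assms(1) self_pt by blast
  have FX: "Fmap (X j) \<noteq> 0" for j using assms(2-4) by (simp add: sc_eq0)
  have PI: "P j \<notin> Ind" for j using XP FX unfolding Ind_def by blast
  have c1: "convP P (pt x0)" unfolding convP_def using XP self_pt[OF assms(6)] assms(5) by blast
  have YF: "Y j \<in> fpt (P j)" for j
  proof -
    have e: "sc (1 / c j) (Fmap (X j)) = Y j" using assms(2,4) by (simp add: sc_sc)
    show ?thesis using fpt_rep[OF PP[of j] XP[of j], of "1 / c j"] e assms(2,3) by simp
  qed
  have c2: "convP (\<lambda>j. fpt (P j)) (pt y)" unfolding convP_def using YF self_pt[OF assms(8)] assms(7) by blast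
  show ?thesis unfolding flim_def using pt_P2[OF assms(8)] PP PI c1 c2 by blast
qed



lemma rho_perm: "rho (y2,y1,y3) = rho (y1,y2,y3)" "rho (y3,y1,y2) = rho (y1,y2,y3)"
  by (simp_all add: algebra_simps)

lemma flim_sup1: assumes "q \<in> Qc" shows "q \<in> flim (pt a1)"
proof -
  have qP: "q \<in> P2" using assms by (simp add: Qc_def)
  obtain y where y: "y \<noteq> 0" "q = pt y" "y \<in> q" using P2_rep[OF qP] by blast
  have ry: "rho y = 0" using assms y(3) by (simp add: Qc_def)
  obtain y1 y2 y3 where yy: "y = (y1,y2,y3)" by (cases y)
  have ry': "rho (y1,y2,y3) = 0" using ry unfolding yy .
  have "rho (y1,y2,y3) = 0" by (simp only: rho_perm ry')
  then obtain al be ga where ab: "al^2 = y1" "be^2 = y2" "ga^2 = y3" "al = be + ga"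
    using sq_choice by blast
  obtain t where t: "t \<longlonglongrightarrow> 0" "\<forall>j. t j \<noteq> 0 \<and> 1 - t j * al \<noteq> 0 \<and> 1 - t j * be \<noteq> 0 \<and> 1 - t j * ga \<noteq> 0"
    using t_exists by blast
  define X where "X = (\<lambda>j. (t j * al, 1 - t j * be, 1 - t j * ga))"
  define Y where "Y = (\<lambda>j. (al^2*(1 - t j*al)^2, be^2*(1 - t j*be)^2, ga^2*(1 - t j*ga)^2))"
  have Xn: "\<forall>j. X j \<noteq> 0" using t unfolding X_def by simp
  have cn: "\<forall>j. 4*(t j)^2 \<noteq> 0" using t by simp
  have "al \<noteq> 0 \<or> be \<noteq> 0 \<or> ga \<noteq> 0" using y(1) yy ab by auto
  then have Yn: "\<forall>j. Y j \<noteq> 0" using t unfolding Y_def by auto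
  have FX: "\<forall>j. Fmap (X j) = sc (4*(t j)^2) (Y j)"
    unfolding X_def Y_def using ab(4) by (simp add: algebra_simps power2_eq_square)
  have "X \<longlonglongrightarrow> (0 * al, 1 - 0 * be, 1 - 0 * ga)" unfolding X_def by (intro tendsto_intros t(1))
  then have XL: "X \<longlonglongrightarrow> a1" by (simp add: a1_def)
  have "Y \<longlonglongrightarrow> (al^2*(1 - 0*al)^2, be^2*(1 - 0*be)^2, ga^2*(1 - 0*ga)^2)" unfolding Y_def by (intro tendsto_intros t(1))
  then have YL: "Y \<longlonglongrightarrow> y" using yy ab by simp
  have "a1 \<noteq> 0" by (simp add: a1_def)
  then have "pt y \<in> flim (pt a1)" using path_flim[OF Xn cn Yn FX XL _ YL y(1)] by blast
  then show ?thesis using y(2) by simp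
qed

lemma flim_sup2: assumes "q \<in> Qc" shows "q \<in> flim (pt a2)"
proof -
  have qP: "q \<in> P2" using assms by (simp add: Qc_def)
  obtain y where y: "y \<noteq> 0" "q = pt y" "y \<in> q" using P2_rep[OF qP] by blast
  have ry: "rho y = 0" using assms y(3) by (simp add: Qc_def)
  obtain y1 y2 y3 where yy: "y = (y1,y2,y3)" by (cases y)
  have ry': "rho (y1,y2,y3) = 0" using ry unfolding yy .
  have "rho (y2,y1,y3) = 0" by (simp only: rho_perm ry')
  then obtain be al ga where ab: "be^2 = y2" "al^2 = y1" "ga^2 = y3" "be = al + ga"
    using sq_choice by blast
  obtain t where t: "t \<longlonglongrightarrow> 0" "\<forall>j. t j \<noteq> 0 \<and> 1 - t j * al \<noteq> 0 \<and> 1 - t j * be \<noteq> 0 \<and> 1 - t j * ga \<noteq> 0"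
    using t_exists by blast
  define X where "X = (\<lambda>j. (1 - t j * al, t j * be, 1 - t j * ga))"
  define Y where "Y = (\<lambda>j. (al^2*(1 - t j*al)^2, be^2*(1 - t j*be)^2, ga^2*(1 - t j*ga)^2))"
  have Xn: "\<forall>j. X j \<noteq> 0" using t unfolding X_def by simp
  have cn: "\<forall>j. 4*(t j)^2 \<noteq> 0" using t by simp
  have "al \<noteq> 0 \<or> be \<noteq> 0 \<or> ga \<noteq> 0" using y(1) yy ab by auto
  then have Yn: "\<forall>j. Y j \<noteq> 0" using t unfolding Y_def by auto
  have FX: "\<forall>j. Fmap (X j) = sc (4*(t j)^2) (Y j)"
    unfolding X_def Y_def using ab(4) by (simp add: algebra_simps power2_eq_square)
  have "X \<longlonglongrightarrow> (1 - 0 * al, 0 * be, 1 - 0 * ga)" unfolding X_def by (intro tendsto_intros t(1))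
  then have XL: "X \<longlonglongrightarrow> a2" by (simp add: a2_def)
  have "Y \<longlonglongrightarrow> (al^2*(1 - 0*al)^2, be^2*(1 - 0*be)^2, ga^2*(1 - 0*ga)^2)" unfolding Y_def by (intro tendsto_intros t(1))
  then have YL: "Y \<longlonglongrightarrow> y" using yy ab by simp
  have "a2 \<noteq> 0" by (simp add: a2_def)
  then have "pt y \<in> flim (pt a2)" using path_flim[OF Xn cn Yn FX XL _ YL y(1)] by blast
  then show ?thesis using y(2) by simp
qed

lemma flim_sup3: assumes "q \<in> Qc" shows "q \<in> flim (pt a3)"
proof -
  have qP: "q \<in> P2" using assms by (simp add: Qc_def)
  obtain y where y: "y \<noteq> 0" "q = pt y" "y \<in> q" using P2_rep[OF qP] by blast
  have ry: "rho y = 0" using assms y(3) by (simp add: Qc_def)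
  obtain y1 y2 y3 where yy: "y = (y1,y2,y3)" by (cases y)
  have ry': "rho (y1,y2,y3) = 0" using ry unfolding yy .
  have "rho (y3,y1,y2) = 0" by (subst rho_perm(2)) (rule ry')
  then obtain ga al be where ab: "ga^2 = y3" "al^2 = y1" "be^2 = y2" "ga = al + be"
    using sq_choice by blast
  obtain t where t: "t \<longlonglongrightarrow> 0" "\<forall>j. t j \<noteq> 0 \<and> 1 - t j * al \<noteq> 0 \<and> 1 - t j * be \<noteq> 0 \<and> 1 - t j * ga \<noteq> 0"
    using t_exists by blast
  define X where "X = (\<lambda>j. (1 - t j * al, 1 - t j * be, t j * ga))"
  define Y where "Y = (\<lambda>j. (al^2*(1 - t j*al)^2, be^2*(1 - t j*be)^2, ga^2*(1 - t j*ga)^2))"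
  have Xn: "\<forall>j. X j \<noteq> 0" using t unfolding X_def by simp
  have cn: "\<forall>j. 4*(t j)^2 \<noteq> 0" using t by simp
  have "al \<noteq> 0 \<or> be \<noteq> 0 \<or> ga \<noteq> 0" using y(1) yy ab by auto
  then have Yn: "\<forall>j. Y j \<noteq> 0" using t unfolding Y_def by auto
  have FX: "\<forall>j. Fmap (X j) = sc (4*(t j)^2) (Y j)"
    unfolding X_def Y_def using ab(4) by (simp add: algebra_simps power2_eq_square)
  have "X \<longlonglongrightarrow> (1 - 0 * al, 1 - 0 * be, 0 * ga)" unfolding X_def by (intro tendsto_intros t(1))
  then have XL: "X \<longlonglongrightarrow> a3" by (simp add: a3_def)
  have "Y \<longlonglongrightarrow> (al^2*(1 - 0*al)^2, be^2*(1 - 0*be)^2, ga^2*(1 - 0*ga)^2)" unfolding Y_def by (intro tendsto_intros t(1))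
  then have YL: "Y \<longlonglongrightarrow> y" using yy ab by simp
  have "a3 \<noteq> 0" by (simp add: a3_def)
  then have "pt y \<in> flim (pt a3)" using path_flim[OF Xn cn Yn FX XL _ YL y(1)] by blast
  then show ?thesis using y(2) by simp
qed



lemma is_real_iff: "is_real (x1,x2,x3) \<longleftrightarrow> x1 \<in> \<real> \<and> x2 \<in> \<real> \<and> x3 \<in> \<real>"
  by (simp add: is_real_def complex_is_Real_iff)

lemma Reals_of: "r \<in> \<real> \<Longrightarrow> r = complex_of_real (Re r)"
  by (simp add: complex_is_Real_iff complex_eq_iff)

lemma sq_pos_real: fixes u :: complex assumes "u^2 = complex_of_real r" "r > 0" shows "u \<in> \<real>"
proof -
  have a: "Im (u^2) = 0" "Re (u^2) > 0" using assms by simp_all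
  have h1: "Im u = 0 \<or> Re u = 0" using a(1) by (simp add: power2_eq_square)
  have h2: "Im u * Im u < Re u * Re u" using a(2) by (simp add: power2_eq_square)
  have "Re u \<noteq> 0"
  proof
    assume "Re u = 0" then show False using h2 zero_le_square[of "Im u"] by simp
  qed
  then have "Im u = 0" using h1 by simp
  then show ?thesis by (simp add: complex_is_Real_iff)
qed

lemma not_A: assumes "p \<in> P2" "p \<notin> A1" "p \<notin> A2" "p \<notin> A3" "w \<in> p"
  shows "-fst w + fst (snd w) + snd (snd w) \<noteq> 0" "fst w - fst (snd w) + snd (snd w) \<noteq> 0"
        "fst w + fst (snd w) - snd (snd w) \<noteq> 0"
proof -
  obtain w1 w2 w3 where ww: "w = (w1,w2,w3)" by (cases w)
  show "-fst w + fst (snd w) + snd (snd w) \<noteq> 0"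
  proof
    assume "-fst w + fst (snd w) + snd (snd w) = 0"
    then have "w = sc w3 a2 + sc w2 a3" using ww by (simp add: a2_def a3_def algebra_simps)
    then have "p \<in> A1" using assms(1,5) unfolding A1_def pline_def by blast
    then show False using assms(2) by blast
  qed
  show "fst w - fst (snd w) + snd (snd w) \<noteq> 0"
  proof
    assume "fst w - fst (snd w) + snd (snd w) = 0"
    then have "w = sc w3 a1 + sc w1 a3" using ww by (simp add: a1_def a3_def algebra_simps)
    then have "p \<in> A2" using assms(1,5) unfolding A2_def pline_def by blast
    then show False using assms(3) by blast
  qed
  show "fst w + fst (snd w) - snd (snd w) \<noteq> 0"
  proof
    assume "fst w + fst (snd w) - snd (snd w) = 0"
    then have "w = sc w2 a1 + sc w1 a2" using ww by (simp add: a1_def a2_def algebra_simps)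
    then have "p \<in> A3" using assms(1,5) unfolding A3_def pline_def by blast
    then show False using assms(4) by blast
  qed
qed

lemma F_ne: assumes "w \<noteq> 0" "-fst w + fst (snd w) + snd (snd w) \<noteq> 0" "fst w - fst (snd w) + snd (snd w) \<noteq> 0"
        "fst w + fst (snd w) - snd (snd w) \<noteq> 0" shows "Fmap w \<noteq> 0"
  using assms by (cases w) auto

lemma part3: assumes "p \<in> P2" "p \<notin> A1" "p \<notin> A2" "p \<notin> A3" shows "p \<in> U \<longleftrightarrow> fpt p \<in> U"
proof -
  define z where "z = (SOME z. z \<in> p)"
  have zp: "z \<in> p" unfolding z_def using P2_some assms(1) by blast
  have pz: "p = pt z" using P2_pt assms(1) zp by blast
  have zn: "z \<noteq> 0" using zp pz by (simp add: in_pt)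
  note nA = not_A[OF assms]
  have Fz: "Fmap z \<noteq> 0" using F_ne zn nA[OF zp] by blast
  have fpz: "fpt p = pt (Fmap z)" unfolding fpt_def z_def ..
  have fP: "fpt p \<in> P2" unfolding fpz using pt_P2 Fz by blast
  show ?thesis
  proof
    assume "p \<in> U"
    then obtain x where x: "x \<in> p" "is_real x" "Re (rho x) < 0" unfolding U_def by blast
    obtain x1 x2 x3 where xx: "x = (x1,x2,x3)" by (cases x)
    have xr: "x1 \<in> \<real>" "x2 \<in> \<real>" "x3 \<in> \<real>" using x(2) xx is_real_iff by auto
    have xn: "x \<noteq> 0" using x(1) pz by (simp add: in_pt)
    have Fx: "Fmap x \<noteq> 0" using F_ne xn nA[OF x(1)] by blast
    have Fxf: "Fmap x \<in> fpt p" using fpt_rep[OF assms(1) x(1), of 1] Fx by simp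
    have Fxr: "is_real (Fmap x)" unfolding xx F_simp is_real_iff using xr
      by (intro conjI Reals_mult Reals_add Reals_diff Reals_minus Reals_power)
    define L where "L = (-x1+x2+x3)*(x1-x2+x3)*(x1+x2-x3)"
    have Lr: "L \<in> \<real>" unfolding L_def using xr by (intro Reals_mult Reals_add Reals_diff Reals_minus)
    have Ln: "L \<noteq> 0" unfolding L_def using nA[OF x(1)] xx by simp
    have rr: "rho x \<in> \<real>" unfolding xx rho_simp using xr
      by (intro Reals_mult Reals_add Reals_diff Reals_power Reals_numeral)
    have e: "rho (Fmap x) = rho x * L^2" unfolding rhoF xx L_def by simp
    obtain a l where al: "rho x = of_real a" "L = of_real l" using Reals_of rr Lr by metis
    have "a < 0" using x(3) al by simp
    moreover have "l \<noteq> 0" using Ln al by simp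
    ultimately have "a * l^2 < 0" by (simp add: mult_neg_pos)
    then have "Re (rho (Fmap x)) < 0" unfolding e al by (simp del: of_real_power add: of_real_power[symmetric])
    then show "fpt p \<in> U" unfolding U_def using fP Fxf Fxr by blast
  next
    assume "fpt p \<in> U"
    then obtain y where y: "y \<in> pt (Fmap z)" "is_real y" "Re (rho y) < 0" unfolding U_def fpz by blast
    obtain c where c: "c \<noteq> 0" "y = sc c (Fmap z)" using y(1) unfolding in_pt by blast
    obtain z1 z2 z3 where zz: "z = (z1,z2,z3)" by (cases z)
    obtain y1 y2 y3 where yy: "y = (y1,y2,y3)" by (cases y)
    have yr: "y1 \<in> \<real>" "y2 \<in> \<real>" "y3 \<in> \<real>" using y(2) yy is_real_iff by auto
    obtain r1 r2 r3 where r: "y1 = of_real r1" "y2 = of_real r2" "y3 = of_real r3" using yr Reals_of by metis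
    have rneg: "r1^2 + r2^2 + r3^2 - 2*(r1*r2 + r2*r3 + r3*r1) < 0" using y(3) yy r by simp
    have p23: "r2 * r3 > 0" using rneg zero_le_power2[of "r1 - r2 - r3"] by (simp add: power2_eq_square algebra_simps)
    have p13: "r1 * r3 > 0" using rneg zero_le_power2[of "r2 - r1 - r3"] by (simp add: power2_eq_square algebra_simps)
    have p12: "r1 * r2 > 0" using rneg zero_le_power2[of "r3 - r1 - r2"] by (simp add: power2_eq_square algebra_simps)
    define sg :: real where "sg = (if r1 > 0 then 1 else -1)"
    have sgp: "sg * r1 > 0" "sg * r2 > 0" "sg * r3 > 0" "sg^2 = 1"
      using p12 p13 p23 unfolding sg_def by (auto simp: zero_less_mult_iff)
    define s where "s = csqrt (of_real sg * c)"
    have s2: "s^2 = of_real sg * c" unfolding s_def by simp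
    have sn: "s \<noteq> 0" using s2 c(1) sgp(4) by (auto simp: power2_eq_square)
    have s4: "s^4 = c^2"
    proof -
      have "s^4 = (s^2)^2" by simp
      also have "\<dots> = (of_real (sg^2)) * c^2" unfolding s2 by (simp add: power2_eq_square)
      finally show ?thesis using sgp(4) by simp
    qed
    define l1 where "l1 = -z1+z2+z3"
    define l2 where "l2 = z1-z2+z3"
    define l3 where "l3 = z1+z2-z3"
    have ln: "l1 \<noteq> 0" "l2 \<noteq> 0" "l3 \<noteq> 0" using nA[OF zp] zz unfolding l1_def l2_def l3_def by simp_all
    have yc: "y1 = c * (z1*l1)^2" "y2 = c * (z2*l2)^2" "y3 = c * (z3*l3)^2"
      using c(2) yy zz unfolding l1_def l2_def l3_def by simp_all
    define u1 where "u1 = s * (z1*l1)"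
    define u2 where "u2 = s * (z2*l2)"
    define u3 where "u3 = s * (z3*l3)"
    have "u1^2 = of_real (sg*r1)" unfolding u1_def using s2 yc(1) r(1) by (simp add: power_mult_distrib)
    then have u1r: "u1 \<in> \<real>" using sq_pos_real sgp(1) by blast
    have "u2^2 = of_real (sg*r2)" unfolding u2_def using s2 yc(2) r(2) by (simp add: power_mult_distrib)
    then have u2r: "u2 \<in> \<real>" using sq_pos_real sgp(2) by blast
    have "u3^2 = of_real (sg*r3)" unfolding u3_def using s2 yc(3) r(3) by (simp add: power_mult_distrib)
    then have u3r: "u3 \<in> \<real>" using sq_pos_real sgp(3) by blast
    define m1 where "m1 = -u1+u2+u3"
    define m2 where "m2 = u1-u2+u3"
    define m3 where "m3 = u1+u2-u3"
    have mr: "m1 \<in> \<real>" "m2 \<in> \<real>" "m3 \<in> \<real>" unfolding m1_def m2_def m3_def using u1r u2r u3r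
      by (auto intro!: Reals_add Reals_diff Reals_minus)
    define v where "v = (m1*m3+m1*m2, m2*m3+m1*m2, m2*m3+m1*m3)"
    have vr: "is_real v" unfolding v_def is_real_iff using mr by (auto intro!: Reals_add Reals_mult)
    define k where "k = 2 * s^2 * (l1*l2*l3)"
    have kn: "k \<noteq> 0" unfolding k_def using sn ln by simp
    have m: "m1 = s * (l2*l3)" "m2 = s * (l1*l3)" "m3 = s*(l1*l2)"
      unfolding m1_def m2_def m3_def u1_def u2_def u3_def l1_def l2_def l3_def by (simp_all add: algebra_simps)
    have lz: "l2+l3 = 2*z1" "l1+l3 = 2*z2" "l1+l2 = 2*z3" unfolding l1_def l2_def l3_def by simp_all
    have v1: "m1*m3+m1*m2 = s^2*(l1*l2*l3)*(l2+l3)" unfolding m by (simp add: algebra_simps power2_eq_square)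
    have v2: "m2*m3+m1*m2 = s^2*(l1*l2*l3)*(l1+l3)" unfolding m by (simp add: algebra_simps power2_eq_square)
    have v3: "m2*m3+m1*m3 = s^2*(l1*l2*l3)*(l1+l2)" unfolding m by (simp add: algebra_simps power2_eq_square)
    have vk: "v = sc k z" unfolding v_def v1 v2 v3 lz k_def zz sc_simp by simp
    have "v \<noteq> 0" unfolding vk sc_eq0 using kn zn by simp
    then have "v \<in> pt z" unfolding in_pt using vk kn by blast
    then have vp: "v \<in> p" using pz by simp
    have rv: "rho v = k^2 * rho z" unfolding vk rho_sc ..
    have Lz: "(-fst z + fst (snd z) + snd (snd z)) * (fst z - fst (snd z) + snd (snd z)) * (fst z + fst (snd z) - snd (snd z)) = l1*l2*l3"
      unfolding zz l1_def l2_def l3_def by simp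
    have ry: "rho y = c^2 * (rho z * (l1*l2*l3)^2)" unfolding c(2) rho_sc rhoF Lz ..
    have "k^2 = 4 * s^4 * (l1*l2*l3)^2" unfolding k_def by (simp add: power_mult_distrib power2_eq_square power4_eq_xxxx)
    then have "rho v = 4 * rho y" unfolding rv ry s4 by simp
    then have "Re (rho v) < 0" using y(3) by simp
    then show "p \<in> U" unfolding U_def using assms(1) vp vr by blast
  qed
qed


theorem mainTheorem15:
  shows "(\<forall>a \<in> Ind. flim a = Qc)
       \<and> (\<forall>p \<in> Qc - Ind. fpt p = p)
       \<and> (\<forall>p \<in> P2 - (A1 \<union> A2 \<union> A3). p \<in> U \<longleftrightarrow> fpt p \<in> U)"
proof (intro conjI)
  show "\<forall>a \<in> Ind. flim a = Qc"
  proof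
    fix a assume a: "a \<in> Ind"
    show "flim a = Qc"
    proof
      show "flim a \<subseteq> Qc" using flim_sub a by blast
      show "Qc \<subseteq> flim a" using Ind_cases[OF a] flim_sup1 flim_sup2 flim_sup3 by blast
    qed
  qed
  show "\<forall>p \<in> Qc - Ind. fpt p = p" using part2 by blast
  show "\<forall>p \<in> P2 - (A1 \<union> A2 \<union> A3). p \<in> U \<longleftrightarrow> fpt p \<in> U" using part3 by blast
qed

end
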